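(* (i) For every feasible transition $s\xrightarrow{\alpha}s'$ of the BDM between states $s,s'\in S$, with $\alpha\in\{D,I,N_=,N_<,d_-,b_+\}$, one has $K(s')=K(s)+1$ if $\alpha=I$, $K(s')=K(s)-1$ if $\alpha=N_<$, and $K(s')=K(s)$ if $\alpha\in\{D,N_=,d_-,b_+\}$. (ii) Consequently, if $s_0\xrightarrow{\alpha_1\cdots\alpha_k}s$ is any path of feasible transitions from the initial state $s_0$ to $s$, and $\#I$, $\#N_<$ denote the numbers of indices $i$ with $\alpha_i=I$, resp. $\alpha_i=N_<$, then $K(s)-K(s_0)=K(s)=\#I-\#N_<$.
   Context: Fix integers $M\ge 1$ and $q\ge 2$. The augmented state set is $\overline S=\{(b_1,\dots,b_M,d;T,t): b_m,d,T\in\mathbb Z,\ 1\le t\le M+1,\ d+T+\sum_{m=1}^M b_m=0\}$, and the BDM state set is $S=\{s\in\overline S: 0\le T\le M\}$. The initial state is $s_0=(0,\dots,0,0;0,M+1)$. The feasible transitions (actions) from $s=(b_1,\dots,b_M,d;T,t)\in S$ are: (a) if $t\le M$ and $b_t>d$: action $D$ (probability $(q-1)/q$) to $(b_1,\dots,b_{t-1},d,b_{t+1},\dots,b_M,b_t;T,t+1)$ (swap of $b_t$ and $d$), and action $I$ (probability $1/q$) to $(b_1,\dots,b_M,d;T,t+1)$; (b) if $t\le M$ and $b_t=d$: action $N_=$ (probability 1) to $(b_1,\dots,b_M,d;T,t+1)$; (c) if $t\le M$ and $b_t<d$: action $N_<$ (probability 1) to $(b_1,\dots,b_M,d;T,t+1)$;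 (d) if $t=M+1$, $T<M$: action $d_-$ (probability 1) to $(b_1,\dots,b_M,d-1;T+1,1)$; (e) if $t=M+1$, $T=M$: action $b_+$ (probability 1) to $(b_1+1,\dots,b_M+1,d;0,1)$. For $s=(b_1,\dots,b_M,d;T,t)\in\overline S$ let $x=(b_1,\dots,b_{t-1},d,b_t,\dots,b_M)$ ($d$ in position $t$), let $\tilde b_1\ge\dots\ge\tilde b_{M+1}$ be its entries sorted nonincreasingly and $\pi_s$ the minimum number of neighbouring transpositions needed to sort $x$ nonincreasingly. The class of $s$ is $K(s)=-\pi_s+MT+2\sum_{m=1}^{M+1}\tilde b_m(M+1-m)$; note $K(s_0)=0$. *)

theory Defs
  imports Main
begin

text \<open>A state (b_1..b_M, d; T, t) is represented as a tuple (b, d, T, t) with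
  b :: int list of length M (b_m = b ! (m-1)), d T :: int, t :: nat.\<close>

type_synonym state = "int list \<times> int \<times> int \<times> nat"

definition in_Sbar :: "nat \<Rightarrow> state \<Rightarrow> bool" where
  "in_Sbar M s = (case s of (b, d, T, t) \<Rightarrow>
     length b = M \<and> 1 \<le> t \<and> t \<le> M + 1 \<and> d + T + sum_list b = 0)"

definition in_S :: "nat \<Rightarrow> state \<Rightarrow> bool" where
  "in_S M s = (in_Sbar M s \<and> (case s of (b, d, T, t) \<Rightarrow> 0 \<le> T \<and> T \<le> int M))"

definition s0 :: "nat \<Rightarrow> state" where
  "s0 M = (replicate M 0, 0, 0, M + 1)"

datatype action = D | I | N_eq | N_lt | d_minus | b_plus

inductive step :: "nat \<Rightarrow> state \<Rightarrow> action \<Rightarrow> state \<Rightarrow> bool" for M where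
  stepD: "in_S M (b, d, T, t) \<Longrightarrow> t \<le> M \<Longrightarrow> b ! (t - 1) > d \<Longrightarrow>
     step M (b, d, T, t) D (b[t - 1 := d], b ! (t - 1), T, t + 1)"
| stepI: "in_S M (b, d, T, t) \<Longrightarrow> t \<le> M \<Longrightarrow> b ! (t - 1) > d \<Longrightarrow>
     step M (b, d, T, t) I (b, d, T, t + 1)"
| stepNeq: "in_S M (b, d, T, t) \<Longrightarrow> t \<le> M \<Longrightarrow> b ! (t - 1) = d \<Longrightarrow>
     step M (b, d, T, t) N_eq (b, d, T, t + 1)"
| stepNlt: "in_S M (b, d, T, t) \<Longrightarrow> t \<le> M \<Longrightarrow> b ! (t - 1) < d \<Longrightarrow>
     step M (b, d, T, t) N_lt (b, d, T, t + 1)"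
| stepdm: "in_S M (b, d, T, t) \<Longrightarrow> t = M + 1 \<Longrightarrow> T < int M \<Longrightarrow>
     step M (b, d, T, t) d_minus (b, d - 1, T + 1, 1)"
| stepbp: "in_S M (b, d, T, t) \<Longrightarrow> t = M + 1 \<Longrightarrow> T = int M \<Longrightarrow>
     step M (b, d, T, t) b_plus (map (\<lambda>x. x + 1) b, d, 0, 1)"

inductive path :: "nat \<Rightarrow> state \<Rightarrow> action list \<Rightarrow> state \<Rightarrow> bool" for M where
  path_nil: "in_S M s \<Longrightarrow> path M s [] s"
| path_snoc: "path M s as s' \<Longrightarrow> step M s' a s'' \<Longrightarrow> in_S M s'' \<Longrightarrow> path M s (as @ [a]) s''"

definition xvec :: "state \<Rightarrow> int list" where
  "xvec s = (case s of (b, d, T, t) \<Rightarrow> take (t - 1) b @ [d] @ drop (t - 1) b)"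

definition adj_swap :: "'a list \<Rightarrow> nat \<Rightarrow> 'a list" where
  "adj_swap xs i = xs[i := xs ! Suc i, Suc i := xs ! i]"

definition sorted_noninc :: "int list \<Rightarrow> bool" where
  "sorted_noninc xs = sorted_wrt (\<ge>) xs"

definition min_adj_swaps :: "int list \<Rightarrow> nat" where
  "min_adj_swaps x = (LEAST n. \<exists>is. length is = n \<and> (\<forall>i\<in>set is. Suc i < length x)
        \<and> sorted_noninc (foldl adj_swap x is))"

definition pi_s :: "state \<Rightarrow> nat" where
  "pi_s s = min_adj_swaps (xvec s)"

text \<open>Entries sorted nonincreasingly: tilde b_m = sorted ! (m-1).\<close>
definition sorted_entries :: "state \<Rightarrow> int list" where
  "sorted_entries s = rev (sort (xvec s))"

definition K :: "nat \<Rightarrow> state \<Rightarrow> int" where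
  "K M s = (case s of (b, d, T, t) \<Rightarrow>
     - int (pi_s s) + int M * T
     + 2 * (\<Sum>m = 1..M + 1. sorted_entries s ! (m - 1) * int (M + 1 - m)))"

definition count_act :: "action \<Rightarrow> action list \<Rightarrow> nat" where
  "count_act a as = length (filter (\<lambda>x. x = a) as)"

end

theory Submission
  imports Defs "HOL-Library.Multiset"
begin


fun invs :: "int list \<Rightarrow> nat" where
  "invs [] = 0"
| "invs (a # xs) = length (filter (\<lambda>y. a < y) xs) + invs xs"

lemma invs_append:
  "invs (xs @ ys) = invs xs + invs ys + sum_list (map (\<lambda>x. length (filter (\<lambda>y. x < y) ys)) xs)"
  by (induction xs) auto

lemma invs_swap:
  "int (invs (pre @ [b, a] @ post)) = int (invs (pre @ [a, b] @ post))
     + (if a < b then -1 else if b < a then 1 else 0)"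
proof -
  have "map (\<lambda>x. length (filter (\<lambda>y. x < y) ([b, a] @ post))) pre
      = map (\<lambda>x. length (filter (\<lambda>y. x < y) ([a, b] @ post))) pre"
    by (intro map_cong) auto
  then show ?thesis by (simp only: invs_append) auto
qed

lemma adj_swap_len[simp]: "length (adj_swap xs i) = length xs"
  by (simp add: adj_swap_def)

lemma decomp2:
  assumes "Suc i < length xs"
  obtains pre a b post where "xs = pre @ [a, b] @ post" "length pre = i"
proof -
  have "xs = take i xs @ drop i xs" by simp
  also have "drop i xs = xs ! i # drop (Suc i) xs" using assms by (simp add: Cons_nth_drop_Suc)
  also have "drop (Suc i) xs = xs ! Suc i # drop (Suc (Suc i)) xs" using assms by (simp add: Cons_nth_drop_Suc)
  finally show ?thesis using that assms by auto
qed

lemma adj_swap_decomp: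
  assumes "xs = pre @ [a, b] @ post" "length pre = i"
  shows "adj_swap xs i = pre @ [b, a] @ post" "xs ! i = a" "xs ! Suc i = b"
  using assms by (auto simp: adj_swap_def list_update_append nth_append)

lemma invs_adj_swap:
  assumes "Suc i < length xs"
  shows "int (invs (adj_swap xs i)) = int (invs xs)
     + (if xs ! i < xs ! Suc i then -1 else if xs ! Suc i < xs ! i then 1 else 0)"
proof -
  obtain pre a b post where h: "xs = pre @ [a, b] @ post" "length pre = i"
    using decomp2[OF assms] by blast
  show ?thesis using adj_swap_decomp[OF h] invs_swap[of pre b a post] h(1) by simp
qed

lemma sorted_invs0: "sorted_wrt (\<ge>) xs \<Longrightarrow> invs xs = 0"
  by (induction xs) (auto simp: filter_empty_conv)

lemma invs0_sorted: "invs xs = 0 \<Longrightarrow> sorted_wrt (\<ge>) xs"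
  by (induction xs) (auto simp: filter_empty_conv)

lemma lower:
  "\<forall>i\<in>set js. Suc i < length x \<Longrightarrow> invs x \<le> length js + invs (foldl adj_swap x js)"
proof (induction js arbitrary: x)
  case Nil then show ?case by simp
next
  case (Cons i js)
  have "int (invs x) \<le> int (invs (adj_swap x i)) + 1"
    using invs_adj_swap[of i x] Cons.prems by auto
  moreover have "invs (adj_swap x i) \<le> length js + invs (foldl adj_swap (adj_swap x i) js)"
    using Cons by auto
  ultimately show ?case by simp
qed

lemma exists_asc:
  "invs x \<noteq> 0 \<Longrightarrow> \<exists>i. Suc i < length x \<and> x ! i < x ! Suc i"
proof (induction x)
  case Nil then show ?case by simp
next
  case (Cons a xs)
  show ?case
  proof (cases "invs xs = 0")
    case False
    then obtain i where "Suc i < length xs" "xs ! i < xs ! Suc i" using Cons by auto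
    then show ?thesis by (intro exI[of _ "Suc i"]) auto
  next
    case True
    then have s: "sorted_wrt (\<ge>) xs" by (rule invs0_sorted)
    from True Cons.prems obtain y where y: "y \<in> set xs" "a < y"
      by (auto simp: filter_empty_conv)
    then obtain z zs where xs: "xs = z # zs" by (cases xs) auto
    have "a < z" using s y xs by auto
    then show ?thesis using xs by (intro exI[of _ 0]) auto
  qed
qed

lemma upper:
  "invs x = n \<Longrightarrow> \<exists>js. length js = n \<and> (\<forall>i\<in>set js. Suc i < length x) \<and> sorted_noninc (foldl adj_swap x js)"
proof (induction n arbitrary: x)
  case 0
  then show ?case by (intro exI[of _ "[]"]) (auto simp: sorted_noninc_def invs0_sorted)
next
  case (Suc n)
  then obtain i where i: "Suc i < length x" "x ! i < x ! Suc i" using exists_asc[of x] Suc.prems by auto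
  have "int (invs (adj_swap x i)) = int (invs x) - 1" using invs_adj_swap[OF i(1)] i(2) by simp
  then have "invs (adj_swap x i) = n" using Suc.prems by simp
  then obtain js where "length js = n" "\<forall>k\<in>set js. Suc k < length (adj_swap x i)"
     "sorted_noninc (foldl adj_swap (adj_swap x i) js)" using Suc.IH by blast
  then show ?case using i by (intro exI[of _ "i # js"]) auto
qed

lemma min_adj_swaps_eq: "min_adj_swaps x = invs x"
  unfolding min_adj_swaps_def
proof (rule Least_equality)
  show "\<exists>js. length js = invs x \<and> (\<forall>i\<in>set js. Suc i < length x) \<and> sorted_noninc (foldl adj_swap x js)"
    using upper by blast
next
  fix n assume "\<exists>js. length js = n \<and> (\<forall>i\<in>set js. Suc i < length x) \<and> sorted_noninc (foldl adj_swap x js)"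
  then obtain js where "length js = n" "\<forall>i\<in>set js. Suc i < length x" "sorted_noninc (foldl adj_swap x js)" by blast
  then show "invs x \<le> n" using lower[of js x] sorted_invs0 by (auto simp: sorted_noninc_def)
qed



definition Q :: "int list \<Rightarrow> int" where
  "Q xs = sum_list (map (\<lambda>x. sum_list (map (\<lambda>y. \<bar>x - y\<bar>) xs)) xs)"

lemma sum_list_perm: fixes f :: "'a \<Rightarrow> 'b::comm_monoid_add" shows "mset xs = mset ys \<Longrightarrow> sum_list (map f xs) = sum_list (map f ys)"
proof -
  assume h: "mset xs = mset ys"
  have "sum_list (map f xs) = sum_mset (mset (map f xs))" by (simp only: sum_mset_sum_list)
  also have "\<dots> = sum_mset (mset (map f ys))" using h by simp
  also have "\<dots> = sum_list (map f ys)" by (simp only: sum_mset_sum_list)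
  finally show ?thesis .
qed

lemma Q_perm: "mset xs = mset ys \<Longrightarrow> Q xs = Q ys"
  unfolding Q_def
proof -
  assume h: "mset xs = mset ys"
  have e1: "map (\<lambda>x. sum_list (map (\<lambda>y. \<bar>x - y\<bar>) xs)) xs = map (\<lambda>x. sum_list (map (\<lambda>y. \<bar>x - y\<bar>) ys)) xs"
    by (intro map_cong refl sum_list_perm[OF h])
  show "sum_list (map (\<lambda>x. sum_list (map (\<lambda>y. \<bar>x - y\<bar>) xs)) xs) =
    sum_list (map (\<lambda>x. sum_list (map (\<lambda>y. \<bar>x - y\<bar>) ys)) ys)"
    unfolding e1 by (rule sum_list_perm[OF h])
qed

lemma Q_cons: "Q (a # xs) = 2 * sum_list (map (\<lambda>y. \<bar>a - y\<bar>) xs) + Q xs"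
proof -
  have "sum_list (map (\<lambda>x. \<bar>x - a\<bar> + sum_list (map (\<lambda>y. \<bar>x - y\<bar>) xs)) xs)
     = sum_list (map (\<lambda>x. \<bar>x - a\<bar>) xs) + sum_list (map (\<lambda>x. sum_list (map (\<lambda>y. \<bar>x - y\<bar>) xs)) xs)"
    by (rule sum_list_addf)
  moreover have "sum_list (map (\<lambda>x. \<bar>x - a\<bar>) xs) = sum_list (map (\<lambda>y. \<bar>a - y\<bar>) xs)"
    by (simp add: abs_minus_commute)
  ultimately show ?thesis by (simp add: Q_def)
qed

lemma Q_shift: "Q (map (\<lambda>x. x + 1) b) = Q b"
  by (simp add: Q_def o_def)

lemma sum_abs_le: "\<forall>y\<in>set ys. y \<le> a \<Longrightarrow> sum_list (map (\<lambda>y. \<bar>a - y\<bar>) ys) = int (length ys) * a - sum_list ys"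
  by (induction ys) (auto simp: algebra_simps)

definition Wt :: "int list \<Rightarrow> int" where
  "Wt ys = (\<Sum>i<length ys. ys ! i * int (length ys - 1 - i))"

lemma Wt_cons: "Wt (a # ys) = a * int (length ys) + Wt ys"
  unfolding Wt_def by (simp add: sum.lessThan_Suc_shift del: sum.lessThan_Suc)

lemma Wt_sorted: "sorted_wrt (\<ge>) ys \<Longrightarrow> 4 * Wt ys = 2 * (int (length ys) - 1) * sum_list ys + Q ys"
proof (induction ys)
  case Nil then show ?case by (simp add: Wt_def Q_def)
next
  case (Cons a ys)
  then have "sum_list (map (\<lambda>y. \<bar>a - y\<bar>) ys) = int (length ys) * a - sum_list ys"
    by (intro sum_abs_le) auto
  then show ?case using Cons by (simp add: Wt_cons Q_cons algebra_simps)
qed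

lemma sum_shift: "(\<Sum>m = 1..Suc n. f (m - 1) * int (Suc n - m)) = (\<Sum>i<Suc n. f i * int (n - i))"
proof -
  have "(\<Sum>m = 1..Suc n. f (m - 1) * int (Suc n - m)) = (\<Sum>i = 0..n. f i * int (n - i))"
    unfolding One_nat_def sum.shift_bounds_cl_Suc_ivl by simp
  then show ?thesis by (simp add: atLeast0AtMost lessThan_Suc_atMost)
qed

lemma xvec_len: "length b = M \<Longrightarrow> 1 \<le> t \<Longrightarrow> t \<le> M + 1 \<Longrightarrow> length (xvec (b, d, T, t)) = M + 1"
  by (simp add: xvec_def)

lemma K2:
  assumes "length b = M" "1 \<le> t" "t \<le> M + 1"
  shows "2 * K M (b, d, T, t) = - 2 * int (invs (xvec (b, d, T, t))) + 2 * int M * T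
     + 2 * int M * sum_list (xvec (b, d, T, t)) + Q (xvec (b, d, T, t))"
proof -
  let ?x = "xvec (b, d, T, t)"
  let ?ys = "rev (sort ?x)"
  have len: "length ?ys = M + 1" using xvec_len[OF assms] by simp
  have srt: "sorted_wrt (\<ge>) ?ys" by (simp add: sorted_wrt_rev)
  have ms: "mset ?ys = mset ?x" by simp
  have "(\<Sum>m = 1..M + 1. sorted_entries (b, d, T, t) ! (m - 1) * int (M + 1 - m)) = Wt ?ys"
    using sum_shift[of "\<lambda>i. ?ys ! i" M] len by (simp add: Wt_def sorted_entries_def)
  moreover have "4 * Wt ?ys = 2 * int M * sum_list ?x + Q ?x"
    using Wt_sorted[OF srt] len Q_perm[OF ms] sum_list_perm[OF ms, of id] by simp
  ultimately show ?thesis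
    by (simp add: K_def pi_s_def min_adj_swaps_eq)
qed



lemma decomp1:
  assumes "i < length b"
  obtains pre c post where "b = pre @ c # post" "length pre = i"
proof -
  have "b = take i b @ b ! i # drop (Suc i) b" using assms by (simp add: id_take_nth_drop)
  then show ?thesis using that assms by (metis length_take min.absorb4)
qed

lemma K_xvec:
  assumes "xvec (b, d, T, t) = xvec (b', d', T, t')"
  shows "K M (b, d, T, t) = K M (b', d', T, t')"
  using assms by (simp add: K_def pi_s_def sorted_entries_def)

lemma in_S_D: "in_S M (b, d, T, t) \<Longrightarrow> length b = M \<and> 1 \<le> t \<and> t \<le> M + 1"
  by (simp add: in_S_def in_Sbar_def)

lemma K_swap:
  assumes "b = pre @ c # post" "length pre = t - 1" "1 \<le> t" "t \<le> M" "length b = M"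
  shows "2 * K M (b, d, T, t + 1) = 2 * K M (b, d, T, t) + 2 * (if d < c then 1 else if c < d then -1 else 0)"
proof -
  have x1: "xvec (b, d, T, t) = pre @ [d, c] @ post" using assms by (simp add: xvec_def)
  have "take t b = pre @ [c]" "drop t b = post" using assms by (simp_all add: take_Cons' drop_Cons')
  then have x2: "xvec (b, d, T, t + 1) = pre @ [c, d] @ post" by (simp add: xvec_def)
  have ms: "mset (pre @ [c, d] @ post) = mset (pre @ [d, c] @ post)" by simp
  have "Q (pre @ [c, d] @ post) = Q (pre @ [d, c] @ post)" by (rule Q_perm[OF ms])
  moreover have "sum_list (pre @ [c, d] @ post) = sum_list (pre @ [d, c] @ post)" by simp
  moreover have "int (invs (pre @ [c, d] @ post)) = int (invs (pre @ [d, c] @ post))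
     + (if d < c then -1 else if c < d then 1 else 0)" by (rule invs_swap)
  moreover have "2 * K M (b, d, T, t + 1) = - 2 * int (invs (xvec (b, d, T, t + 1))) + 2 * int M * T
     + 2 * int M * sum_list (xvec (b, d, T, t + 1)) + Q (xvec (b, d, T, t + 1))"
    using assms by (intro K2) auto
  moreover have "2 * K M (b, d, T, t) = - 2 * int (invs (xvec (b, d, T, t))) + 2 * int M * T
     + 2 * int M * sum_list (xvec (b, d, T, t)) + Q (xvec (b, d, T, t))"
    using assms by (intro K2) auto
  ultimately show ?thesis unfolding x1 x2 by auto
qed

lemma key_count:
  "int (length (filter (\<lambda>y. d \<le> y) b)) - int (length (filter (\<lambda>x. x < d) b))
   = sum_list (map (\<lambda>y. \<bar>d - 1 - y\<bar>) b) - sum_list (map (\<lambda>y. \<bar>d - y\<bar>) b)"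
  by (induction b) auto

lemma invs_snoc: "invs (b @ [d]) = invs b + length (filter (\<lambda>x. x < d) b)"
  by (induction b) auto

lemma invs_shift: "invs (map (\<lambda>x. x + 1) b) = invs b"
proof (induction b)
  case (Cons a b)
  have "filter (\<lambda>y. a + 1 < y + 1) b = filter (\<lambda>y. a < y) b" by (intro filter_cong) auto
  then show ?case using Cons by (simp add: filter_map o_def)
qed simp

lemma sum_shift1: "sum_list (map (\<lambda>x. x + 1) b) = sum_list b + int (length b)"
  by (induction b) auto

lemma Q_snoc: "Q (b @ [d]) = 2 * sum_list (map (\<lambda>y. \<bar>d - y\<bar>) b) + Q b"
proof -
  have "Q (b @ [d]) = Q (d # b)" by (rule Q_perm) simp
  then show ?thesis by (simp add: Q_cons)
qed


lemma K_dminus: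
  assumes "length b = M"
  shows "K M (b, d - 1, T + 1, 1) = K M (b, d, T, M + 1)"
proof -
  have x1: "xvec (b, d, T, M + 1) = b @ [d]" using assms by (simp add: xvec_def)
  have x2: "xvec (b, d - 1, T + 1, 1) = (d - 1) # b" by (simp add: xvec_def)
  have f: "filter (\<lambda>y. d - 1 < y) b = filter (\<lambda>y. d \<le> y) b" by (intro filter_cong) auto
  have e1: "2 * K M (b, d - 1, T + 1, 1) = - 2 * int (invs ((d - 1) # b)) + 2 * int M * (T + 1)
     + 2 * int M * sum_list ((d - 1) # b) + Q ((d - 1) # b)"
    using assms K2[of b M 1 "d - 1" "T + 1"] x2 by simp
  have e2: "2 * K M (b, d, T, M + 1) = - 2 * int (invs (b @ [d])) + 2 * int M * T
     + 2 * int M * sum_list (b @ [d]) + Q (b @ [d])"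
    using assms K2[of b M "M + 1" d T] x1 by simp
  have "2 * K M (b, d - 1, T + 1, 1) = 2 * K M (b, d, T, M + 1)"
  proof -
    have h1: "int (invs ((d - 1) # b)) = int (length (filter (\<lambda>y. d \<le> y) b)) + int (invs b)"
      using f by simp
    have h2: "int (invs (b @ [d])) = int (invs b) + int (length (filter (\<lambda>x. x < d) b))"
      by (simp add: invs_snoc)
    have h3: "Q ((d - 1) # b) = 2 * sum_list (map (\<lambda>y. \<bar>d - 1 - y\<bar>) b) + Q b" by (rule Q_cons)
    have h4: "Q (b @ [d]) = 2 * sum_list (map (\<lambda>y. \<bar>d - y\<bar>) b) + Q b" by (rule Q_snoc)
    have h5: "int M * sum_list ((d - 1) # b) = int M * d - int M + int M * sum_list b"
      by (simp add: algebra_simps)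
    have h6: "int M * sum_list (b @ [d]) = int M * d + int M * sum_list b"
      by (simp add: algebra_simps)
    have h7: "int M * (T + 1) = int M * T + int M" by (simp add: algebra_simps)
    show ?thesis unfolding e1 e2 using h1 h2 h3 h4 h5 h6 h7 key_count[of d b] by linarith
  qed
  then show ?thesis by simp
qed

lemma K_bplus:
  assumes "length b = M"
  shows "K M (map (\<lambda>x. x + 1) b, d, 0, 1) = K M (b, d, int M, M + 1)"
proof -
  have x1: "xvec (b, d, int M, M + 1) = b @ [d]" using assms by (simp add: xvec_def)
  have x2: "xvec (map (\<lambda>x. x + 1) b, d, 0, 1) = d # map (\<lambda>x. x + 1) b" by (simp add: xvec_def)
  have f: "filter (\<lambda>y. d < y + 1) b = filter (\<lambda>y. d \<le> y) b" by (intro filter_cong) auto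
  have f2: "length (filter (\<lambda>y. d < y) (map (\<lambda>x. x + 1) b)) = length (filter (\<lambda>y. d \<le> y) b)"
    using f by (simp add: filter_map o_def)
  have a2: "map (\<lambda>y. \<bar>d - y\<bar>) (map (\<lambda>x. x + 1) b) = map (\<lambda>y. \<bar>d - 1 - y\<bar>) b"
    proof -
    have eq: "\<And>x::int. d - (x + 1) = d - 1 - x" by simp
    show ?thesis by (simp add: o_def eq)
  qed
  have e1: "2 * K M (map (\<lambda>x. x + 1) b, d, 0, 1) = - 2 * int (invs (d # map (\<lambda>x. x + 1) b))
     + 2 * int M * sum_list (d # map (\<lambda>x. x + 1) b) + Q (d # map (\<lambda>x. x + 1) b)"
    using assms K2[of "map (\<lambda>x. x + 1) b" M 1 d 0] x2 by simp
  have e2: "2 * K M (b, d, int M, M + 1) = - 2 * int (invs (b @ [d])) + 2 * int M * int M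
     + 2 * int M * sum_list (b @ [d]) + Q (b @ [d])"
    using assms K2[of b M "M + 1" d "int M"] x1 by simp
  have "2 * K M (map (\<lambda>x. x + 1) b, d, 0, 1) = 2 * K M (b, d, int M, M + 1)"
  proof -
    have h1: "int (invs (d # map (\<lambda>x. x + 1) b)) = int (length (filter (\<lambda>y. d \<le> y) b)) + int (invs b)"
      using f2 by (simp add: invs_shift)
    have h2: "int (invs (b @ [d])) = int (invs b) + int (length (filter (\<lambda>x. x < d) b))"
      by (simp add: invs_snoc)
    have h3: "Q (d # map (\<lambda>x. x + 1) b) = 2 * sum_list (map (\<lambda>y. \<bar>d - 1 - y\<bar>) b) + Q b"
      by (simp only: Q_cons Q_shift a2)
    have h4: "Q (b @ [d]) = 2 * sum_list (map (\<lambda>y. \<bar>d - y\<bar>) b) + Q b" by (rule Q_snoc)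
    have h5: "int M * sum_list (d # map (\<lambda>x. x + 1) b) = int M * d + int M * int M + int M * sum_list b"
      using assms by (simp add: sum_shift1 algebra_simps)
    have h6: "int M * sum_list (b @ [d]) = int M * d + int M * sum_list b"
      by (simp add: algebra_simps)
    show ?thesis unfolding e1 e2 using h1 h2 h3 h4 h5 h6 key_count[of d b] by linarith
  qed
  then show ?thesis by simp
qed



lemma step_K:
  assumes "step M s a s'"
  shows "K M s' = K M s + (if a = I then 1 else if a = N_lt then -1 else 0)"
  using assms
proof cases
  case (stepD b d T t)
  have l: "length b = M" "1 \<le> t" using in_S_D[OF stepD(4)] by auto
  have tl: "t - 1 < length b" using l stepD(5) by simp
  obtain pre c post where h: "b = pre @ c # post" "length pre = t - 1"
    using decomp1[OF tl] by blast
  have t: "t = Suc (length pre)" using h l by simp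
  have "xvec (b[t - 1 := d], b ! (t - 1), T, t + 1) = xvec (b, d, T, t)"
    unfolding xvec_def h(1) t by (simp add: list_update_append)
  then have "K M (b[t - 1 := d], b ! (t - 1), T, t + 1) = K M (b, d, T, t)" by (rule K_xvec)
  then show ?thesis using stepD(1-3) by simp
next
  case (stepI b d T t)
  have l: "length b = M" "1 \<le> t" using in_S_D[OF stepI(4)] by auto
  have tl: "t - 1 < length b" using l stepI(5) by simp
  obtain pre c post where h: "b = pre @ c # post" "length pre = t - 1"
    using decomp1[OF tl] by blast
  have c: "b ! (t - 1) = c" using h by (simp add: nth_append)
  show ?thesis using K_swap[OF h l(2) stepI(5) l(1), of d T] stepI c by simp
next
  case (stepNeq b d T t)
  have l: "length b = M" "1 \<le> t" using in_S_D[OF stepNeq(4)] by auto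
  have tl: "t - 1 < length b" using l stepNeq(5) by simp
  obtain pre c post where h: "b = pre @ c # post" "length pre = t - 1"
    using decomp1[OF tl] by blast
  have c: "b ! (t - 1) = c" using h by (simp add: nth_append)
  show ?thesis using K_swap[OF h l(2) stepNeq(5) l(1), of d T] stepNeq c by simp
next
  case (stepNlt b d T t)
  have l: "length b = M" "1 \<le> t" using in_S_D[OF stepNlt(4)] by auto
  have tl: "t - 1 < length b" using l stepNlt(5) by simp
  obtain pre c post where h: "b = pre @ c # post" "length pre = t - 1"
    using decomp1[OF tl] by blast
  have c: "b ! (t - 1) = c" using h by (simp add: nth_append)
  show ?thesis using K_swap[OF h l(2) stepNlt(5) l(1), of d T] stepNlt c by simp
next
  case (stepdm b d T t)
  have l: "length b = M" using in_S_D[OF stepdm(4)] by auto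
  show ?thesis using K_dminus[OF l, of d T] stepdm by simp
next
  case (stepbp b d T t)
  have l: "length b = M" using in_S_D[OF stepbp(4)] by auto
  show ?thesis using K_bplus[OF l, of d] stepbp by simp
qed


lemma K_s0: "K M (s0 M) = 0"
proof -
  have x: "xvec (s0 M) = replicate (Suc M) 0" by (simp add: xvec_def s0_def replicate_append_same)
  have i: "invs (replicate n 0) = 0" for n by (induction n) auto
  have "2 * K M (s0 M) = 0"
    using K2[of "replicate M 0" M "M + 1" 0 0] x i by (simp add: s0_def Q_def sum_list_replicate)
  then show ?thesis by simp
qed

lemma path_inS: "path M s as s' \<Longrightarrow> in_S M s'"
  by (induction rule: path.induct) auto

theorem theorem8:
  fixes M :: nat
  assumes "M \<ge> 1"
  shows "(\<forall>s a s'. in_S M s \<longrightarrow> in_S M s' \<longrightarrow> step M s a s' \<longrightarrow>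
            (a = I \<longrightarrow> K M s' = K M s + 1) \<and>
            (a = N_lt \<longrightarrow> K M s' = K M s - 1) \<and>
            (a \<in> {D, N_eq, d_minus, b_plus} \<longrightarrow> K M s' = K M s))
       \<and> (\<forall>as s. path M (s0 M) as s \<longrightarrow>
            K M s - K M (s0 M) = K M s \<and>
            K M s = int (count_act I as) - int (count_act N_lt as))"
proof (intro conjI allI impI)
  fix s a s' assume "step M s a s'"
  then have "K M s' = K M s + (if a = I then 1 else if a = N_lt then -1 else 0)" by (rule step_K)
  then show "a = I \<Longrightarrow> K M s' = K M s + 1" "a = N_lt \<Longrightarrow> K M s' = K M s - 1"
    "a \<in> {D, N_eq, d_minus, b_plus} \<Longrightarrow> K M s' = K M s" by auto
next
  fix as s assume "path M (s0 M) as s"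
  then show "K M s - K M (s0 M) = K M s" by (simp add: K_s0)
next
  fix as s assume "path M (s0 M) as s"
  then have "K M s = K M (s0 M) + int (count_act I as) - int (count_act N_lt as)"
  proof (induction rule: path.induct)
    case (path_nil s) then show ?case by (simp add: count_act_def)
  next
    case (path_snoc s as s' a s'')
    then show ?case using step_K[OF path_snoc.hyps(2)] by (auto simp: count_act_def)
  qed
  then show "K M s = int (count_act I as) - int (count_act N_lt as)" by (simp add: K_s0)
qed

end
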